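(* Let $\omega\in\Omega$. Let $\xi_0,\xi_1$ be two distinct infinite clusters of $\omega$ and let $C_1,C_2$ be two distinct infinite contours of $\phi(\omega)$. Then it is impossible that both $C_1$ and $C_2$ are incident to both $\xi_0$ and $\xi_1$.
   Context: Let $G$ be the square grid with vertex set $\mathbb{Z}^2$ and nearest-neighbour edges. The face of $G$ with lower-left corner $(m,n)$ is black if $m+n$ is even, white otherwise. $\Omega\subset\{0,1\}^{\mathbb{Z}^2}$ is the set of $\omega$ such that for every black face the states of its four vertices, listed clockwise from the lower-left corner, form one of $0000,1111,0011,1100,0110,1001$. A cluster of $\omega$ is a maximal $G$-connected set of vertices on which $\omega$ is constant, infinite if it has infinitely many vertices. Let $\mathbb{L}_1$ have vertices $(m-\tfrac12,n+\tfrac12)$, $m,n$ both even, and $\mathbb{L}_2$ vertices $(m-\tfrac12,n+\tfrac12)$, $m,n$ both odd; in each, two vertices are joined by an edge (a closed segment of length $2$) iff at Euclidean distance $2$. The center of each black face $F$ is the midpoint of exactly one edge $e_1$ of $\mathbb{L}_1$ and one edge $e_2$ of $\mathbb{L}_2$. Define $\phi(\omega)\in\{0,1\}^{E(\mathbb{L}_1)\cup E(\mathbb{L}_2)}$: if the configuration around $F$ is $0000$ or $1111$ both get $0$; if the two upper vertices share a state different from the two lower ones, the horizontal one of $e_1,e_2$ gets $1$, the vertical $0$; if the two left vertices share a state different from the two right ones, the vertical one gets $1$, the horizontal $0$. Edges with value $1$ are present; a contour is a connected component of the set of present edges, infinite if it has infinitely many edges. A cluster is incident to a contour if some vertex of the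 cluster is at Euclidean distance $\tfrac12$ from some edge (segment) of the contour. *)

theory Defs
  imports "HOL-Analysis.Analysis"
begin

type_synonym config = "int \<times> int \<Rightarrow> nat"
type_synonym pt = "real \<times> real"

text \<open>Black faces: lower-left corner (m,n) with m+n even.\<close>
definition black_face :: "int \<Rightarrow> int \<Rightarrow> bool" where
  "black_face m n \<longleftrightarrow> even (m + n)"

definition face_word :: "config \<Rightarrow> int \<Rightarrow> int \<Rightarrow> nat list" where
  "face_word \<omega> m n = [\<omega> (m, n), \<omega> (m, n + 1), \<omega> (m + 1, n + 1), \<omega> (m + 1, n)]"

definition Omega :: "config set" where
  "Omega = {\<omega>. (\<forall>v. \<omega> v \<in> {0, 1}) \<and>
     (\<forall>m n. black_face m n \<longrightarrow>
        face_word \<omega> m n \<in> {[0,0,0,0], [1,1,1,1], [0,0,1,1], [1,1,0,0], [0,1,1,0], [1,0,0,1]})}"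

definition grid_adj :: "int \<times> int \<Rightarrow> int \<times> int \<Rightarrow> bool" where
  "grid_adj u v \<longleftrightarrow> \<bar>fst u - fst v\<bar> + \<bar>snd u - snd v\<bar> = 1"

definition same_cluster :: "config \<Rightarrow> ((int \<times> int) \<times> (int \<times> int)) set" where
  "same_cluster \<omega> = {(u, v). grid_adj u v \<and> \<omega> u = \<omega> v}\<^sup>*"

definition is_cluster :: "config \<Rightarrow> (int \<times> int) set \<Rightarrow> bool" where
  "is_cluster \<omega> S \<longleftrightarrow> (\<exists>v. S = {u. (v, u) \<in> same_cluster \<omega>})"

definition L1V :: "pt set" where
  "L1V = {(of_int m - 1/2, of_int n + 1/2) | m n. even m \<and> even n}"

definition L2V :: "pt set" where
  "L2V = {(of_int m - 1/2, of_int n + 1/2) | m n. odd m \<and> odd n}"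

text \<open>Edges: an edge is represented by the set of its two endpoints; the edge as
  a closed segment is the convex hull of that set.\<close>
definition lat_edges :: "pt set \<Rightarrow> pt set set" where
  "lat_edges V = {{p, q} | p q. p \<in> V \<and> q \<in> V \<and> dist p q = 2}"

definition all_edges :: "pt set set" where
  "all_edges = lat_edges L1V \<union> lat_edges L2V"

definition edge_segment :: "pt set \<Rightarrow> pt set" where
  "edge_segment e = convex hull e"

definition upper_lower :: "config \<Rightarrow> int \<Rightarrow> int \<Rightarrow> bool" where
  "upper_lower \<omega> m n \<longleftrightarrow> \<omega> (m, n + 1) = \<omega> (m + 1, n + 1) \<and> \<omega> (m, n) = \<omega> (m + 1, n)
      \<and> \<omega> (m, n + 1) \<noteq> \<omega> (m, n)"

definition left_right :: "config \<Rightarrow> int \<Rightarrow> int \<Rightarrow> bool" where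
  "left_right \<omega> m n \<longleftrightarrow> \<omega> (m, n) = \<omega> (m, n + 1) \<and> \<omega> (m + 1, n) = \<omega> (m + 1, n + 1)
      \<and> \<omega> (m, n) \<noteq> \<omega> (m + 1, n)"

definition phi :: "config \<Rightarrow> pt set \<Rightarrow> nat" where
  "phi \<omega> e = (if (\<exists>p q m n. e = {p, q} \<and> black_face m n \<and>
                     midpoint p q = (of_int m + 1/2, of_int n + 1/2) \<and>
                     ((snd p = snd q \<and> upper_lower \<omega> m n) \<or>
                      (fst p = fst q \<and> left_right \<omega> m n)))
              then 1 else 0)"

definition present_edges :: "config \<Rightarrow> pt set set" where
  "present_edges \<omega> = {e \<in> all_edges. phi \<omega> e = 1}"

definition contour_rel :: "config \<Rightarrow> (pt set \<times> pt set) set" where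
  "contour_rel \<omega> = {(e, e'). e \<in> present_edges \<omega> \<and> e' \<in> present_edges \<omega> \<and> e \<inter> e' \<noteq> {}}\<^sup>*"

definition is_contour :: "config \<Rightarrow> pt set set \<Rightarrow> bool" where
  "is_contour \<omega> C \<longleftrightarrow> (\<exists>e \<in> present_edges \<omega>. C = {e'. (e, e') \<in> contour_rel \<omega>})"

definition incident :: "pt set set \<Rightarrow> (int \<times> int) set \<Rightarrow> bool" where
  "incident C S \<longleftrightarrow> (\<exists>v \<in> S. \<exists>e \<in> C.
      infdist (of_int (fst v), of_int (snd v)) (edge_segment e) = 1/2)"

end

theory Submission
  imports Defs
begin


definition Pc :: "(int \<Rightarrow> bool) \<Rightarrow> int \<Rightarrow> bool" where
  "Pc c x = (if 0 \<le> x then odd (card {i. 0 \<le> i \<and> i < x \<and> c i})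
             else odd (card {i. x \<le> i \<and> i < 0 \<and> c i}))"

lemma Pc_0: "Pc c 0 = False"
proof -
  have "{i. 0 \<le> i \<and> i < (0::int) \<and> c i} = {}" by auto
  then show ?thesis unfolding Pc_def by (metis (no_types) card.empty even_zero order_refl)
qed

lemma Pc_step: "Pc c (x+1) = (Pc c x \<noteq> c x)"
proof (cases "0 \<le> x")
  case True
  have fin: "finite {i. 0 \<le> i \<and> i < x \<and> c i}"
    by (rule finite_subset[of _ "{0..<x}"]) auto
  have eq: "{i. 0 \<le> i \<and> i \<le> x \<and> c i} = (if c x then insert x {i. 0 \<le> i \<and> i < x \<and> c i} else {i. 0 \<le> i \<and> i < x \<and> c i})"
    using True by (auto; smt (verit))
  show ?thesis using True fin by (simp add: Pc_def eq)
next
  case False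
  define A where "A = {i. x + 1 \<le> i \<and> i < 0 \<and> c i}"
  have fin: "finite A"
    unfolding A_def by (rule finite_subset[of _ "{x+1..<0}"]) auto
  have h1: "Pc c (x+1) = odd (card A)"
  proof (cases "x = -1")
    case True
    have "A = {}" using True by (auto simp: A_def)
    then show ?thesis using True Pc_0[of c] by simp
  next
    case F2: False
    then have "\<not> 0 \<le> x + 1" using False by simp
    then show ?thesis by (simp add: Pc_def A_def)
  qed
  have eq: "{i. x \<le> i \<and> i < 0 \<and> c i} = (if c x then insert x A else A)"
    using False by (auto simp: A_def; smt (verit))
  have h2: "Pc c x = (if c x then odd (card (insert x A)) else odd (card A))"
    using False by (simp add: Pc_def eq)
  show ?thesis using h1 h2 fin by (auto simp: A_def)
qed

lemma Pc_step': "Pc c (x-1) = (Pc c x \<noteq> c (x-1))"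
  using Pc_step[of c "x-1"] by auto

lemma grid_adj_cases:
  assumes "grid_adj u v"
  shows "v = (fst u + 1, snd u) \<or> v = (fst u - 1, snd u) \<or> v = (fst u, snd u + 1) \<or> v = (fst u, snd u - 1)"
  using assms unfolding grid_adj_def by (cases u; cases v) (auto simp: abs_if split: if_splits)

lemma cut_exists:
  fixes W :: "int \<times> int \<Rightarrow> int \<times> int \<Rightarrow> bool"
  assumes sym: "\<And>u v. W u v = W v u"
  and even: "\<And>x y. (W (x,y) (x,y+1) \<noteq> W (x,y+1) (x+1,y+1)) = (W (x+1,y) (x+1,y+1) \<noteq> W (x,y) (x+1,y))"
  shows "\<exists>\<sigma>::int\<times>int\<Rightarrow>bool. \<forall>u v. grid_adj u v \<longrightarrow> (\<sigma> u \<noteq> \<sigma> v) = W u v"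
proof -
  define col where "col x = (\<lambda>j. W (x,j) (x,j+1))" for x
  define h where "h = Pc (\<lambda>i. W (i,0) (i+1,0))"
  define \<sigma> where "\<sigma> p = (h (fst p) \<noteq> Pc (col (fst p)) (snd p))" for p
  have vert: "(\<sigma> (x,y+1) \<noteq> \<sigma> (x,y)) = W (x,y) (x,y+1)" for x y
    by (auto simp: \<sigma>_def Pc_step col_def)
  have hor0: "(Pc (col (x+1)) y \<noteq> Pc (col x) y) = (W (x,0) (x+1,0) \<noteq> W (x,y) (x+1,y))" for x y
  proof (induction y rule: int_induct[where k=0])
    case base
    then show ?case by (simp add: Pc_0)
  next
    case (step1 i)
    have e: "(W (x,i) (x,i+1) \<noteq> W (x,i+1) (x+1,i+1)) = (W (x+1,i) (x+1,i+1) \<noteq> W (x,i) (x+1,i))"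
      by (rule even)
    show ?case using step1(2) e by (simp add: Pc_step col_def) blast
  next
    case (step2 i)
    have e: "(W (x,i-1) (x,i-1+1) \<noteq> W (x,i-1+1) (x+1,i-1+1)) = (W (x+1,i-1) (x+1,i-1+1) \<noteq> W (x,i-1) (x+1,i-1))"
      by (rule even)
    show ?case using step2(2) e by (simp add: Pc_step' col_def) blast
  qed
  have hor: "(\<sigma> (x+1,y) \<noteq> \<sigma> (x,y)) = W (x,y) (x+1,y)" for x y
    using hor0[of x y] by (auto simp: \<sigma>_def h_def Pc_step)
  have "\<forall>u v. grid_adj u v \<longrightarrow> (\<sigma> u \<noteq> \<sigma> v) = W u v"
  proof (intro allI impI)
    fix u v assume "grid_adj u v"
    from grid_adj_cases[OF this] show "(\<sigma> u \<noteq> \<sigma> v) = W u v"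
    proof (elim disjE)
      assume "v = (fst u + 1, snd u)" then show ?thesis using hor[of "fst u" "snd u"] by auto
    next
      assume "v = (fst u - 1, snd u)" then show ?thesis using hor[of "fst u - 1" "snd u"] sym[of u v] by auto
    next
      assume "v = (fst u, snd u + 1)" then show ?thesis using vert[of "fst u" "snd u"] by auto
    next
      assume "v = (fst u, snd u - 1)" then show ?thesis using vert[of "fst u" "snd u - 1"] sym[of u v] by auto
    qed
  qed
  then show ?thesis by blast
qed



definition cc :: "int \<Rightarrow> int \<Rightarrow> pt" where
  "cc p q = (of_int p + 1/2, of_int q + 1/2)"

definition Hd :: "int \<Rightarrow> int \<Rightarrow> pt set" where
  "Hd m n = {cc (m-1) n, cc (m+1) n}"

definition Vd :: "int \<Rightarrow> int \<Rightarrow> pt set" where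
  "Vd m n = {cc m (n-1), cc m (n+1)}"

definition FC :: "int \<Rightarrow> int \<Rightarrow> (int \<times> int) set" where
  "FC m n = {(m,n),(m,n+1),(m+1,n),(m+1,n+1)}"

definition pface :: "config \<Rightarrow> pt set \<Rightarrow> int \<Rightarrow> int \<Rightarrow> bool" where
  "pface \<omega> e m n \<longleftrightarrow> black_face m n \<and>
     ((e = Hd m n \<and> upper_lower \<omega> m n) \<or> (e = Vd m n \<and> left_right \<omega> m n))"

lemma cc_inj: "cc p q = cc p' q' \<longleftrightarrow> p = p' \<and> q = q'"
  by (simp add: cc_def)

lemma omega_pattern:
  assumes "\<omega> \<in> Omega" "black_face m n"
  shows "[\<omega> (m, n), \<omega> (m, n + 1), \<omega> (m + 1, n + 1), \<omega> (m + 1, n)] \<in>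
     {[0,0,0,0], [1,1,1,1], [0,0,1,1], [1,1,0,0], [0,1,1,0], [1,0,0,1]}"
  using assms unfolding Omega_def face_word_def by blast

lemma omega_sides:
  assumes "\<omega> \<in> Omega" "black_face m n"
  shows "\<omega> (m,n) \<noteq> \<omega> (m,n+1) \<Longrightarrow> upper_lower \<omega> m n"
    and "\<omega> (m+1,n) \<noteq> \<omega> (m+1,n+1) \<Longrightarrow> upper_lower \<omega> m n"
    and "\<omega> (m,n) \<noteq> \<omega> (m+1,n) \<Longrightarrow> left_right \<omega> m n"
    and "\<omega> (m,n+1) \<noteq> \<omega> (m+1,n+1) \<Longrightarrow> left_right \<omega> m n"
  using omega_pattern[OF assms] by (auto simp: upper_lower_def left_right_def)

lemma ul_not_lr: "upper_lower \<omega> m n \<Longrightarrow> \<not> left_right \<omega> m n"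
  by (auto simp: upper_lower_def left_right_def)

lemma Hd_eq: "Hd m n = {(of_int m - 1/2, of_int n + 1/2), (of_int m + 3/2, of_int n + 1/2)}"
  by (auto simp: Hd_def cc_def)

lemma Vd_eq: "Vd m n = {(of_int m + 1/2, of_int n - 1/2), (of_int m + 1/2, of_int n + 3/2)}"
  by (auto simp: Vd_def cc_def)

lemma in_L1V: "even m \<Longrightarrow> even n \<Longrightarrow> (of_int m - 1/2, of_int n + 1/2) \<in> L1V"
  unfolding L1V_def by blast

lemma in_L2V: "odd m \<Longrightarrow> odd n \<Longrightarrow> (of_int m - 1/2, of_int n + 1/2) \<in> L2V"
  unfolding L2V_def by blast

lemma Hd_all: assumes "black_face m n" shows "Hd m n \<in> all_edges"
proof -
  have pq: "Hd m n = {(of_int m - 1/2, of_int n + 1/2), (of_int (m+2) - 1/2, of_int n + 1/2)}"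
    by (auto simp: Hd_def cc_def algebra_simps)
  have d: "dist (of_int m - 1/2 :: real, of_int n + 1/2 :: real) (of_int (m+2) - 1/2, of_int n + 1/2) = 2"
    by (simp add: dist_Pair_Pair dist_real_def)
  show ?thesis
  proof (cases "even m")
    case True
    then have "even n" using assms by (simp add: black_face_def)
    then show ?thesis using True d unfolding all_edges_def lat_edges_def pq
      using in_L1V[of m n] in_L1V[of "m+2" n] True by auto
  next
    case False
    then have "odd n" using assms by (simp add: black_face_def)
    then show ?thesis using False d unfolding all_edges_def lat_edges_def pq
      using in_L2V[of m n] in_L2V[of "m+2" n] False by auto
  qed
qed

lemma Vd_all: assumes "black_face m n" shows "Vd m n \<in> all_edges"
proof -
  have pq: "Vd m n = {(of_int (m+1) - 1/2, of_int (n-1) + 1/2), (of_int (m+1) - 1/2, of_int (n+1) + 1/2)}"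
    by (auto simp: Vd_def cc_def algebra_simps)
  have d: "dist (of_int (m+1) - 1/2 :: real, of_int (n-1) + 1/2 :: real) (of_int (m+1) - 1/2, of_int (n+1) + 1/2) = 2"
    by (simp add: dist_Pair_Pair dist_real_def)
  show ?thesis
  proof (cases "even m")
    case True
    then have "even n" using assms by (simp add: black_face_def)
    then show ?thesis using True d unfolding all_edges_def lat_edges_def pq
      using in_L2V[of "m+1" "n-1"] in_L2V[of "m+1" "n+1"] True by auto
  next
    case False
    then have "odd n" using assms by (simp add: black_face_def)
    then show ?thesis using False d unfolding all_edges_def lat_edges_def pq
      using in_L1V[of "m+1" "n-1"] in_L1V[of "m+1" "n+1"] False by auto
  qed
qed

lemma pface_present: assumes "pface \<omega> e m n" shows "e \<in> present_edges \<omega>"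
proof -
  have bf: "black_face m n" using assms by (simp add: pface_def)
  have mid: "midpoint (cc (m-1) n) (cc (m+1) n) = (of_int m + 1/2, of_int n + 1/2)"
    "midpoint (cc m (n-1)) (cc m (n+1)) = (of_int m + 1/2, of_int n + 1/2)"
    by (auto simp: midpoint_def cc_def algebra_simps)
  show ?thesis
  proof (cases "e = Hd m n \<and> upper_lower \<omega> m n")
    case True
    have ex: "\<exists>p q m n. e = {p, q} \<and> black_face m n \<and>
                     midpoint p q = (of_int m + 1/2, of_int n + 1/2) \<and>
                     ((snd p = snd q \<and> upper_lower \<omega> m n) \<or>
                      (fst p = fst q \<and> left_right \<omega> m n))"
      apply (rule exI[of _ "cc (m-1) n"], rule exI[of _ "cc (m+1) n"])
      apply (rule exI[of _ m], rule exI[of _ n]) using True bf mid by (simp add: Hd_def cc_def)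
    then have "phi \<omega> e = 1" unfolding phi_def by (rule if_P)
    then show ?thesis using True Hd_all[OF bf] by (simp add: present_edges_def)
  next
    case False
    then have F: "e = Vd m n" "left_right \<omega> m n" using assms by (auto simp: pface_def)
    have ex: "\<exists>p q m n. e = {p, q} \<and> black_face m n \<and>
                     midpoint p q = (of_int m + 1/2, of_int n + 1/2) \<and>
                     ((snd p = snd q \<and> upper_lower \<omega> m n) \<or>
                      (fst p = fst q \<and> left_right \<omega> m n))"
      apply (rule exI[of _ "cc m (n-1)"], rule exI[of _ "cc m (n+1)"])
      apply (rule exI[of _ m], rule exI[of _ n]) using F bf mid by (simp add: Vd_def cc_def)
    then have "phi \<omega> e = 1" unfolding phi_def by (rule if_P)
    then show ?thesis using F Vd_all[OF bf] by (simp add: present_edges_def)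
  qed
qed

lemma dist_pts: "dist (p1::real, p2::real) (q1, q2) = sqrt ((p1 - q1)^2 + (p2 - q2)^2)"
  by (simp add: dist_Pair_Pair dist_real_def)

lemma present_pface: assumes "e \<in> present_edges \<omega>" shows "\<exists>m n. pface \<omega> e m n"
proof -
  have ea: "e \<in> all_edges" and ph: "phi \<omega> e = 1" using assms by (auto simp: present_edges_def)
  from ph obtain p q m n where e: "e = {p, q}" and bf: "black_face m n" and
     mid: "midpoint p q = (of_int m + 1/2, of_int n + 1/2)" and
     hv: "(snd p = snd q \<and> upper_lower \<omega> m n) \<or> (fst p = fst q \<and> left_right \<omega> m n)"
    unfolding phi_def by (auto split: if_splits)
  from ea obtain p' q' where e': "e = {p', q'}" and d': "dist p' q' = 2"
    unfolding all_edges_def lat_edges_def by auto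
  have d: "dist p q = 2" using e e' d' by (auto simp: doubleton_eq_iff dist_commute)
  obtain p1 p2 where pp: "p = (p1, p2)" by (cases p)
  obtain q1 q2 where qq: "q = (q1, q2)" by (cases q)
  have s1: "p1 + q1 = 2 * of_int m + 1" and s2: "p2 + q2 = 2 * of_int n + 1"
    using mid by (auto simp: pp qq midpoint_def)
  have dd: "sqrt ((p1 - q1)^2 + (p2 - q2)^2) = 2" using d by (simp add: pp qq dist_pts)
  show ?thesis
  proof (cases "snd p = snd q \<and> upper_lower \<omega> m n")
    case True
    then have "p2 = q2" by (simp add: pp qq)
    then have "sqrt ((p1 - q1)^2) = 2" using dd by simp
    then have "\<bar>p1 - q1\<bar> = 2" by simp
    then have "p1 - q1 = 2 \<or> q1 - p1 = 2" by (auto simp: abs_if split: if_splits)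
    then have "e = Hd m n" using s1 s2 \<open>p2 = q2\<close> unfolding e pp qq Hd_def cc_def
      by (auto simp: doubleton_eq_iff algebra_simps)
    then show ?thesis using True bf by (auto simp: pface_def)
  next
    case False
    then have F: "fst p = fst q" "left_right \<omega> m n" using hv by auto
    then have "p1 = q1" by (simp add: pp qq)
    then have "sqrt ((p2 - q2)^2) = 2" using dd by simp
    then have "\<bar>p2 - q2\<bar> = 2" by simp
    then have "p2 - q2 = 2 \<or> q2 - p2 = 2" by (auto simp: abs_if split: if_splits)
    then have "e = Vd m n" using s1 s2 \<open>p1 = q1\<close> unfolding e pp qq Vd_def cc_def
      by (auto simp: doubleton_eq_iff algebra_simps)
    then show ?thesis using F bf by (auto simp: pface_def)
  qed
qed

lemma present_iff: "e \<in> present_edges \<omega> \<longleftrightarrow> (\<exists>m n. pface \<omega> e m n)"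
  using present_pface pface_present by blast



definition wedge :: "int \<times> int \<Rightarrow> int \<times> int \<Rightarrow> pt set" where
  "wedge u v = (if snd u = snd v then
      (if even (min (fst u) (fst v) + snd u) then Vd (min (fst u) (fst v)) (snd u)
       else Vd (min (fst u) (fst v)) (snd u - 1))
    else (if even (fst u + min (snd u) (snd v)) then Hd (fst u) (min (snd u) (snd v))
       else Hd (fst u - 1) (min (snd u) (snd v))))"

lemma wedge_sym: "grid_adj u v \<Longrightarrow> wedge u v = wedge v u"
  using grid_adj_cases[of u v] by (auto simp: wedge_def min.commute)

lemma grid_adj_sym: "grid_adj u v = grid_adj v u"
  by (auto simp: grid_adj_def abs_minus_commute)

lemma wall_pface_pos:
  assumes "\<omega> \<in> Omega" "\<omega> (x,y) \<noteq> \<omega> v"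
    and "v = (x+1,y) \<or> v = (x,y+1)"
  shows "\<exists>m n. pface \<omega> (wedge (x,y) v) m n"
  using assms(3)
proof
  assume v: "v = (x+1,y)"
  show ?thesis
  proof (cases "even (x+y)")
    case True
    then have "black_face x y" by (simp add: black_face_def)
    then have "left_right \<omega> x y" using omega_sides(3)[OF assms(1)] assms(2) v by auto
    then show ?thesis using True \<open>black_face x y\<close> v by (auto simp: wedge_def pface_def)
  next
    case False
    then have b: "black_face x (y-1)" by (simp add: black_face_def)
    then have "left_right \<omega> x (y-1)" using omega_sides(4)[OF assms(1) b] assms(2) v by auto
    then show ?thesis using False b v by (auto simp: wedge_def pface_def)
  qed
next
  assume v: "v = (x,y+1)"
  show ?thesis
  proof (cases "even (x+y)")
    case True
    then have "black_face x y" by (simp add: black_face_def)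
    then have "upper_lower \<omega> x y" using omega_sides(1)[OF assms(1)] assms(2) v by auto
    then show ?thesis using True \<open>black_face x y\<close> v by (auto simp: wedge_def pface_def)
  next
    case False
    then have b: "black_face (x-1) y" by (simp add: black_face_def)
    then have "upper_lower \<omega> (x-1) y" using omega_sides(2)[OF assms(1) b] assms(2) v by auto
    then show ?thesis using False b v by (auto simp: wedge_def pface_def)
  qed
qed

lemma wall_pface:
  assumes "\<omega> \<in> Omega" "grid_adj u v" "\<omega> u \<noteq> \<omega> v"
  shows "\<exists>m n. pface \<omega> (wedge u v) m n"
proof -
  obtain x y where u: "u = (x,y)" by (cases u)
  from grid_adj_cases[OF assms(2)] show ?thesis
  proof (elim disjE)
    assume "v = (fst u + 1, snd u)" then show ?thesis using wall_pface_pos[OF assms(1)] assms u by auto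
  next
    assume "v = (fst u, snd u + 1)" then show ?thesis using wall_pface_pos[OF assms(1)] assms u by auto
  next
    assume v: "v = (fst u - 1, snd u)"
    have "\<exists>m n. pface \<omega> (wedge v u) m n" using wall_pface_pos[OF assms(1), of "x-1" y u] assms u v by auto
    then show ?thesis using wedge_sym[OF assms(2)] by simp
  next
    assume v: "v = (fst u, snd u - 1)"
    have "\<exists>m n. pface \<omega> (wedge v u) m n" using wall_pface_pos[OF assms(1), of x "y-1" u] assms u v by auto
    then show ?thesis using wedge_sym[OF assms(2)] by simp
  qed
qed

lemma wedge_h: "wedge (x,y) (x+1,y) = (if even (x+y) then Vd x y else Vd x (y-1))"
  by (simp add: wedge_def)

lemma wedge_v: "wedge (x,y) (x,y+1) = (if even (x+y) then Hd x y else Hd (x-1) y)"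
  by (simp add: wedge_def)

lemma FC_adj:
  assumes "u \<in> FC m n" "v \<in> FC m n" "grid_adj u v"
  shows "((u,v) \<in> {((m,n),(m,n+1)), ((m,n+1),(m,n))} \<or> (u,v) \<in> {((m+1,n),(m+1,n+1)), ((m+1,n+1),(m+1,n))})
       \<or> ((u,v) \<in> {((m,n),(m+1,n)), ((m+1,n),(m,n))} \<or> (u,v) \<in> {((m,n+1),(m+1,n+1)), ((m+1,n+1),(m,n+1))})"
  using assms unfolding FC_def grid_adj_def by auto

lemma black_wedge:
  assumes "black_face m n" "u \<in> FC m n" "v \<in> FC m n" "grid_adj u v"
  shows "(wedge u v = Hd m n \<and> ((u,v) \<in> {((m,n),(m,n+1)), ((m,n+1),(m,n))} \<or> (u,v) \<in> {((m+1,n),(m+1,n+1)), ((m+1,n+1),(m+1,n))}))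
       \<or> (wedge u v = Vd m n \<and> ((u,v) \<in> {((m,n),(m+1,n)), ((m+1,n),(m,n))} \<or> (u,v) \<in> {((m,n+1),(m+1,n+1)), ((m+1,n+1),(m,n+1))}))"
proof -
  have e: "even (m+n)" using assms(1) by (simp add: black_face_def)
  have o1: "\<not> even (m + 1 + n)" "\<not> even (m + (n + 1))" using e by presburger+
  have w1: "wedge (m,n) (m,n+1) = Hd m n" using e by (simp add: wedge_v)
  have w2: "wedge (m+1,n) (m+1,n+1) = Hd m n" using o1 wedge_v[of "m+1" n] by simp
  have w3: "wedge (m,n) (m+1,n) = Vd m n" using e by (simp add: wedge_h)
  have w4: "wedge (m,n+1) (m+1,n+1) = Vd m n" using o1 wedge_h[of m "n+1"] by simp
  have s: "grid_adj (a::int\<times>int) b \<Longrightarrow> wedge a b = wedge b a" for a b by (rule wedge_sym)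
  have a: "grid_adj (m,n) (m,n+1)" "grid_adj (m+1,n) (m+1,n+1)" "grid_adj (m,n) (m+1,n)" "grid_adj (m,n+1) (m+1,n+1)"
    by (simp_all add: grid_adj_def)
  from FC_adj[OF assms(2-4)] show ?thesis
    using w1 w2 w3 w4 s[OF a(1)] s[OF a(2)] s[OF a(3)] s[OF a(4)] by auto
qed

lemma black_side:
  assumes "\<omega> \<in> Omega" "pface \<omega> e m n" "u \<in> FC m n" "v \<in> FC m n" "grid_adj u v" "\<omega> u \<noteq> \<omega> v"
  shows "wedge u v = e"
proof -
  have bf: "black_face m n" using assms(2) by (simp add: pface_def)
  note sides = omega_sides[OF assms(1) bf]
  from black_wedge[OF bf assms(3-5)] show ?thesis
  proof
    assume h: "wedge u v = Hd m n \<and> ((u,v) \<in> {((m,n),(m,n+1)), ((m,n+1),(m,n))} \<or> (u,v) \<in> {((m+1,n),(m+1,n+1)), ((m+1,n+1),(m+1,n))})"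
    then have "upper_lower \<omega> m n" using assms(6) sides(1,2) by auto
    then show ?thesis using h assms(2) ul_not_lr by (auto simp: pface_def)
  next
    assume h: "wedge u v = Vd m n \<and> ((u,v) \<in> {((m,n),(m+1,n)), ((m+1,n),(m,n))} \<or> (u,v) \<in> {((m,n+1),(m+1,n+1)), ((m+1,n+1),(m,n+1))})"
    then have "left_right \<omega> m n" using assms(6) sides(3,4) by auto
    then show ?thesis using h assms(2) ul_not_lr by (auto simp: pface_def)
  qed
qed

lemma white_side:
  assumes "odd (p+q)" "u \<in> FC p q" "v \<in> FC p q" "grid_adj u v"
  shows "cc p q \<in> wedge u v"
proof -
  have o1: "even (p + 1 + q)" "even (p + (q + 1))" using assms(1) by presburger+
  have w1: "cc p q \<in> wedge (p,q) (p,q+1)" using assms(1) by (simp add: wedge_v Hd_def)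
  have w2: "cc p q \<in> wedge (p+1,q) (p+1,q+1)" using o1 wedge_v[of "p+1" q] by (simp add: Hd_def)
  have w3: "cc p q \<in> wedge (p,q) (p+1,q)" using assms(1) by (simp add: wedge_h Vd_def)
  have w4: "cc p q \<in> wedge (p,q+1) (p+1,q+1)" using o1 wedge_h[of p "q+1"] by (simp add: Vd_def)
  have s: "grid_adj (a::int\<times>int) b \<Longrightarrow> wedge a b = wedge b a" for a b by (rule wedge_sym)
  have a: "grid_adj (p,q) (p,q+1)" "grid_adj (p+1,q) (p+1,q+1)" "grid_adj (p,q) (p+1,q)" "grid_adj (p,q+1) (p+1,q+1)"
    by (simp_all add: grid_adj_def)
  from FC_adj[OF assms(2-4)] show ?thesis
    using w1 w2 w3 w4 s[OF a(1)] s[OF a(2)] s[OF a(3)] s[OF a(4)] by auto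
qed

lemma pface_unique:
  assumes "pface \<omega> e m n" "pface \<omega> e m' n'"
  shows "m = m' \<and> n = n'"
  using assms by (auto simp: pface_def Hd_def Vd_def doubleton_eq_iff cc_inj)

lemma pface_endpoint:
  assumes "pface \<omega> e m n" "z \<in> e"
  shows "\<exists>w\<in>{(m-1,n),(m+1,n),(m,n-1),(m,n+1)}. z = cc (fst w) (snd w)"
  using assms by (auto simp: pface_def Hd_def Vd_def)

lemma nbr_facts:
  assumes "black_face m n" "w \<in> {(m-1,n),(m+1,n),(m,n-1),(m,n+1)}"
  shows "odd (fst w + snd w)" "\<exists>a. a \<in> FC m n \<and> a \<in> FC (fst w) (snd w)"
  using assms apply (auto simp: black_face_def)[1]
  using assms(2) apply (elim insertE)
  apply (rule exI[of _ "(m,n)"]; simp add: FC_def)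
  apply (rule exI[of _ "(m+1,n)"]; simp add: FC_def)
  apply (rule exI[of _ "(m,n)"]; simp add: FC_def)
  apply (rule exI[of _ "(m,n+1)"]; simp add: FC_def)
  by simp



definition safe :: "config \<Rightarrow> pt set set \<Rightarrow> int \<times> int \<Rightarrow> int \<times> int \<Rightarrow> bool" where
  "safe \<omega> C u v \<longleftrightarrow> grid_adj u v \<and> (\<omega> u \<noteq> \<omega> v \<longrightarrow> wedge u v \<in> C)"

definition SR :: "config \<Rightarrow> pt set set \<Rightarrow> ((int \<times> int) \<times> (int \<times> int)) set" where
  "SR \<omega> C = {(u,v). safe \<omega> C u v}"

lemma safe_sym: "safe \<omega> C u v = safe \<omega> C v u"
  unfolding safe_def using grid_adj_sym wedge_sym by metis

lemma SR_sym: "sym (SR \<omega> C)"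
  unfolding SR_def sym_def using safe_sym by blast

lemma SR_rt_sym: "(a,b) \<in> (SR \<omega> C)\<^sup>* \<Longrightarrow> (b,a) \<in> (SR \<omega> C)\<^sup>*"
  by (meson SR_sym sym_rtrancl symD)

lemma face_conn:
  assumes saf: "\<And>u v. u \<in> FC p q \<Longrightarrow> v \<in> FC p q \<Longrightarrow> grid_adj u v \<Longrightarrow> safe \<omega> C u v"
    and "a \<in> FC p q" "b \<in> FC p q"
  shows "(a,b) \<in> (SR \<omega> C)\<^sup>*"
proof -
  have st: "u \<in> FC p q \<Longrightarrow> v \<in> FC p q \<Longrightarrow> grid_adj u v \<Longrightarrow> (u,v) \<in> (SR \<omega> C)\<^sup>*" for u v
    using saf[of u v] by (intro r_into_rtrancl) (simp add: SR_def)
  have c: "(p,q) \<in> FC p q" "(p,q+1) \<in> FC p q" "(p+1,q) \<in> FC p q" "(p+1,q+1) \<in> FC p q"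
    by (auto simp: FC_def)
  have g: "grid_adj (p,q) (p,q+1)" "grid_adj (p,q+1) (p,q)" "grid_adj (p,q) (p+1,q)" "grid_adj (p+1,q) (p,q)"
     "grid_adj (p,q+1) (p+1,q+1)" "grid_adj (p+1,q+1) (p,q+1)"
    by (auto simp: grid_adj_def)
  have s1: "((p,q),(p,q+1)) \<in> (SR \<omega> C)\<^sup>*" "((p,q+1),(p,q)) \<in> (SR \<omega> C)\<^sup>*"
     "((p,q),(p+1,q)) \<in> (SR \<omega> C)\<^sup>*" "((p+1,q),(p,q)) \<in> (SR \<omega> C)\<^sup>*"
     "((p,q+1),(p+1,q+1)) \<in> (SR \<omega> C)\<^sup>*" "((p+1,q+1),(p,q+1)) \<in> (SR \<omega> C)\<^sup>*"
    using st c g by blast+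
  have to: "x \<in> FC p q \<Longrightarrow> ((p,q),x) \<in> (SR \<omega> C)\<^sup>*" for x
    using s1 unfolding FC_def by (auto intro: rtrancl_trans)
  have fr: "x \<in> FC p q \<Longrightarrow> (x,(p,q)) \<in> (SR \<omega> C)\<^sup>*" for x
    using s1 unfolding FC_def by (auto intro: rtrancl_trans)
  show ?thesis using to[OF assms(3)] fr[OF assms(2)] by (rule rtrancl_trans[rotated])
qed

definition K :: "config \<Rightarrow> pt set \<Rightarrow> pt set set" where
  "K \<omega> e0 = {e'. (e0, e') \<in> contour_rel \<omega>}"

lemma cls_present: "(e0, e) \<in> contour_rel \<omega> \<Longrightarrow> e0 \<in> present_edges \<omega> \<Longrightarrow> e \<in> present_edges \<omega>"
  unfolding contour_rel_def by (induction rule: rtrancl_induct) auto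

lemma cls_close: "(e0, e) \<in> contour_rel \<omega> \<Longrightarrow> e \<in> present_edges \<omega> \<Longrightarrow> e' \<in> present_edges \<omega>
   \<Longrightarrow> e \<inter> e' \<noteq> {} \<Longrightarrow> (e0, e') \<in> contour_rel \<omega>"
  unfolding contour_rel_def by (rule rtrancl_into_rtrancl) auto

lemma contour_rel_sym: "(a,b) \<in> contour_rel \<omega> \<Longrightarrow> (b,a) \<in> contour_rel \<omega>"
proof -
  have "sym {(e, e'). e \<in> present_edges \<omega> \<and> e' \<in> present_edges \<omega> \<and> e \<inter> e' \<noteq> {}}"
    by (auto simp: sym_def)
  from sym_rtrancl[OF this] show "(a,b) \<in> contour_rel \<omega> \<Longrightarrow> (b,a) \<in> contour_rel \<omega>"
    unfolding contour_rel_def by (auto simp: sym_def)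
qed

lemma contour_disj:
  assumes "is_contour \<omega> C1" "is_contour \<omega> C2" "C1 \<noteq> C2"
  shows "C1 \<inter> C2 = {}"
proof (rule ccontr)
  assume "C1 \<inter> C2 \<noteq> {}"
  then obtain e where e: "e \<in> C1" "e \<in> C2" by auto
  obtain e1 where C1: "C1 = {e'. (e1, e') \<in> contour_rel \<omega>}" using assms(1) by (auto simp: is_contour_def)
  obtain e2 where C2: "C2 = {e'. (e2, e') \<in> contour_rel \<omega>}" using assms(2) by (auto simp: is_contour_def)
  have "(e1,e) \<in> contour_rel \<omega>" "(e2,e) \<in> contour_rel \<omega>" using e C1 C2 by auto
  then have "(e1,e2) \<in> contour_rel \<omega>" "(e2,e1) \<in> contour_rel \<omega>"
    using contour_rel_sym unfolding contour_rel_def by (meson rtrancl_trans)+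
  then have "C1 = C2" unfolding C1 C2 contour_rel_def by (auto intro: rtrancl_trans)
  then show False using assms(3) by simp
qed

lemma black_safe:
  assumes "\<omega> \<in> Omega" "pface \<omega> e m n" "e \<in> C" "u \<in> FC m n" "v \<in> FC m n" "grid_adj u v"
  shows "safe \<omega> C u v"
  using black_side[OF assms(1,2,4,5,6)] assms(3,6) by (auto simp: safe_def)

lemma white_safe:
  assumes om: "\<omega> \<in> Omega" and r: "(e0, e) \<in> contour_rel \<omega>" and eP: "e \<in> present_edges \<omega>"
    and z: "cc p q \<in> e" and o: "odd (p+q)" and uv: "u \<in> FC p q" "v \<in> FC p q" "grid_adj u v"
  shows "safe \<omega> (K \<omega> e0) u v"
  unfolding safe_def
proof (intro conjI impI)
  show "grid_adj u v" by (rule uv(3))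
  assume w: "\<omega> u \<noteq> \<omega> v"
  have wP: "wedge u v \<in> present_edges \<omega>" using wall_pface[OF om uv(3) w] pface_present by blast
  have "cc p q \<in> wedge u v" by (rule white_side[OF o uv])
  then have "e \<inter> wedge u v \<noteq> {}" using z by blast
  then show "wedge u v \<in> K \<omega> e0" using cls_close[OF r eP wP] by (simp add: K_def)
qed

lemma walk:
  assumes om: "\<omega> \<in> Omega" and e0P: "e0 \<in> present_edges \<omega>" and pf0: "pface \<omega> e0 m0 n0"
    and a0: "a0 \<in> FC m0 n0" and r: "(e0, e) \<in> contour_rel \<omega>"
  shows "\<forall>m n a. pface \<omega> e m n \<longrightarrow> a \<in> FC m n \<longrightarrow> (a0, a) \<in> (SR \<omega> (K \<omega> e0))\<^sup>*"
  using r unfolding contour_rel_def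
proof (induction rule: rtrancl_induct)
  case base
  show ?case
  proof (intro allI impI)
    fix m n a assume pf: "pface \<omega> e0 m n" and a: "a \<in> FC m n"
    have mn: "m = m0" "n = n0" using pface_unique[OF pf pf0] by auto
    have e0K: "e0 \<in> K \<omega> e0" by (simp add: K_def contour_rel_def)
    show "(a0, a) \<in> (SR \<omega> (K \<omega> e0))\<^sup>*"
    proof (rule face_conn[OF _ a0])
      fix u v assume "u \<in> FC m0 n0" "v \<in> FC m0 n0" "grid_adj u v"
      then show "safe \<omega> (K \<omega> e0) u v" by (rule black_safe[OF om pf0 e0K])
    qed (use a mn in simp)
  qed
next
  case (step e e')
  have r1: "(e0, e) \<in> contour_rel \<omega>" using step(1) by (simp add: contour_rel_def)
  have eP: "e \<in> present_edges \<omega>" and e'P: "e' \<in> present_edges \<omega>" and ne: "e \<inter> e' \<noteq> {}"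
    using step(2) by auto
  have r2: "(e0, e') \<in> contour_rel \<omega>" by (rule cls_close[OF r1 eP e'P ne])
  obtain z where z: "z \<in> e" "z \<in> e'" using ne by auto
  obtain m1 n1 where pf1: "pface \<omega> e m1 n1" using present_pface[OF eP] by blast
  show ?case
  proof (intro allI impI)
    fix m n a assume pf: "pface \<omega> e' m n" and a: "a \<in> FC m n"
    obtain w1 where w1: "w1 \<in> {(m1-1,n1),(m1+1,n1),(m1,n1-1),(m1,n1+1)}" "z = cc (fst w1) (snd w1)"
      using pface_endpoint[OF pf1 z(1)] by blast
    obtain w where w: "w \<in> {(m-1,n),(m+1,n),(m,n-1),(m,n+1)}" "z = cc (fst w) (snd w)"
      using pface_endpoint[OF pf z(2)] by blast
    have ww: "w1 = w" using w1(2) w(2) cc_inj by (simp add: prod_eq_iff)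
    have bf1: "black_face m1 n1" using pf1 by (simp add: pface_def)
    have bf: "black_face m n" using pf by (simp add: pface_def)
    obtain s1 where s1: "s1 \<in> FC m1 n1" "s1 \<in> FC (fst w) (snd w)" using nbr_facts(2)[OF bf1 w1(1)] ww by blast
    obtain s2 where s2: "s2 \<in> FC m n" "s2 \<in> FC (fst w) (snd w)" using nbr_facts(2)[OF bf w(1)] by blast
    have ow: "odd (fst w + snd w)" using nbr_facts(1)[OF bf w(1)] .
    have A: "(a0, s1) \<in> (SR \<omega> (K \<omega> e0))\<^sup>*" using step(3) pf1 s1(1) by blast
    have zc: "cc (fst w) (snd w) \<in> e" using z w by simp
    have B: "(s1, s2) \<in> (SR \<omega> (K \<omega> e0))\<^sup>*"
    proof (rule face_conn[OF _ s1(2) s2(2)])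
      fix u v assume "u \<in> FC (fst w) (snd w)" "v \<in> FC (fst w) (snd w)" "grid_adj u v"
      then show "safe \<omega> (K \<omega> e0) u v" by (rule white_safe[OF om r1 eP zc ow])
    qed
    have e'K: "e' \<in> K \<omega> e0" using r2 by (simp add: K_def)
    have C: "(s2, a) \<in> (SR \<omega> (K \<omega> e0))\<^sup>*"
    proof (rule face_conn[OF _ s2(1) a])
      fix u v assume "u \<in> FC m n" "v \<in> FC m n" "grid_adj u v"
      then show "safe \<omega> (K \<omega> e0) u v" by (rule black_safe[OF om pf e'K])
    qed
    show "(a0, a) \<in> (SR \<omega> (K \<omega> e0))\<^sup>*" using A B C by (meson rtrancl_trans)
  qed
qed



lemma infdist_attained:
  fixes a :: "real \<times> real"
  assumes "closed S" "S \<noteq> {}"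
  shows "\<exists>s\<in>S. infdist a S = dist a s"
proof -
  obtain s where s: "s \<in> S" "\<And>y. y \<in> S \<Longrightarrow> dist a s \<le> dist a y"
    using distance_attains_inf[OF assms] by blast
  have "infdist a S \<le> dist a s" by (rule infdist_le[OF s(1)])
  moreover have "dist a s \<le> infdist a S"
    unfolding infdist_notempty[OF assms(2)] by (rule cINF_greatest[OF assms(2) s(2)])
  ultimately show ?thesis using s(1) by force
qed

lemma int_between:
  fixes x m :: int
  assumes "real_of_int m - 1/2 \<le> real_of_int x" "real_of_int x \<le> real_of_int m + 3/2"
  shows "x = m \<or> x = m + 1"
proof -
  have "real_of_int (x - m) > -1" "real_of_int (x - m) < 2" using assms by simp_all
  then have "x - m > -1" "x - m < 2" by linarith+
  then show ?thesis by linarith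
qed

lemma sq_case:
  fixes X Y a b u :: real and y n :: int
  assumes "sqrt ((X - (a + 2*u))^2 + (real_of_int y - (real_of_int n + 1/2))^2) = 1/2"
  shows "(y = n \<or> y = n + 1) \<and> X = a + 2*u"
proof -
  define A where "A = (X - (a + 2*u))^2"
  define B where "B = (real_of_int y - (real_of_int n + 1/2))^2"
  let ?A = A and ?B = B
  have s: "?A + ?B = 1/4"
  proof -
    have nn: "0 \<le> ?A + ?B" by (simp add: A_def B_def)
    have "?A + ?B = (sqrt (?A + ?B))^2" using nn by simp
    also have "\<dots> = 1/4" unfolding A_def B_def by (subst assms) (simp add: power2_eq_square)
    finally show ?thesis .
  qed
  have A0: "0 \<le> ?A" by (simp add: A_def)
  have "?B \<le> (1/2)^2" using s A0 by (simp add: power2_eq_square)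
  then have "\<bar>real_of_int y - (real_of_int n + 1/2)\<bar> \<le> \<bar>1/2\<bar>"
    using abs_le_square_iff unfolding B_def by blast
  then have "\<bar>real_of_int y - (real_of_int n + 1/2)\<bar> \<le> 1/2" by simp
  then have h: "-(1/2) \<le> real_of_int y - (real_of_int n + 1/2)" "real_of_int y - (real_of_int n + 1/2) \<le> 1/2"
    by arith+
  then have "0 \<le> real_of_int (y - n)" "real_of_int (y - n) \<le> 1" by simp_all
  then have yn: "y - n \<ge> 0" "y - n \<le> 1" by linarith+
  then have y: "y = n \<or> y = n + 1" by linarith
  then have "?B = 1/4" by (auto simp: B_def power2_eq_square field_simps)
  then have "?A = 0" using s by simp
  then show ?thesis using y by (simp add: A_def)
qed

lemma seg_H:
  assumes "infdist (real_of_int x, real_of_int y) (edge_segment (Hd m n)) = 1/2"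
  shows "(x,y) \<in> FC m n"
proof -
  define P where "P = (real_of_int m - 1/2, real_of_int n + 1/2)"
  define Q where "Q = (real_of_int m + 3/2, real_of_int n + 1/2)"
  have S: "edge_segment (Hd m n) = closed_segment P Q"
    by (simp add: edge_segment_def Hd_eq segment_convex_hull P_def Q_def)
  obtain s where s: "s \<in> closed_segment P Q" "infdist (real_of_int x, real_of_int y) (closed_segment P Q) = dist (real_of_int x, real_of_int y) s"
    using infdist_attained[where S="closed_segment P Q" and a="(real_of_int x, real_of_int y)"] by auto
  obtain u where u: "0 \<le> u" "u \<le> 1" "s = (1 - u) *\<^sub>R P + u *\<^sub>R Q" using s(1) in_segment(1) by blast
  have ss: "s = (real_of_int m - 1/2 + 2*u, real_of_int n + 1/2)"
    by (simp add: u(3) P_def Q_def algebra_simps; simp add: field_simps)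
  have "sqrt ((real_of_int x - (real_of_int m - 1/2 + 2*u))^2 + (real_of_int y - (real_of_int n + 1/2))^2) = 1/2"
    using assms s(2) S ss by (simp add: dist_pts)
  from sq_case[OF this] have h: "y = n \<or> y = n + 1" "real_of_int x = real_of_int m - 1/2 + 2*u" by auto
  have "x = m \<or> x = m + 1" by (rule int_between) (use h(2) u in auto)
  then show ?thesis using h(1) by (auto simp: FC_def)
qed

lemma seg_V:
  assumes "infdist (real_of_int x, real_of_int y) (edge_segment (Vd m n)) = 1/2"
  shows "(x,y) \<in> FC m n"
proof -
  define P where "P = (real_of_int m + 1/2, real_of_int n - 1/2)"
  define Q where "Q = (real_of_int m + 1/2, real_of_int n + 3/2)"
  have S: "edge_segment (Vd m n) = closed_segment P Q"
    by (simp add: edge_segment_def Vd_eq segment_convex_hull P_def Q_def)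
  obtain s where s: "s \<in> closed_segment P Q" "infdist (real_of_int x, real_of_int y) (closed_segment P Q) = dist (real_of_int x, real_of_int y) s"
    using infdist_attained[where S="closed_segment P Q" and a="(real_of_int x, real_of_int y)"] by auto
  obtain u where u: "0 \<le> u" "u \<le> 1" "s = (1 - u) *\<^sub>R P + u *\<^sub>R Q" using s(1) in_segment(1) by blast
  have ss: "s = (real_of_int m + 1/2, real_of_int n - 1/2 + 2*u)"
    by (simp add: u(3) P_def Q_def algebra_simps; simp add: field_simps)
  have "sqrt ((real_of_int x - (real_of_int m + 1/2))^2 + (real_of_int y - (real_of_int n - 1/2 + 2*u))^2) = 1/2"
    using assms s(2) S ss by (simp add: dist_pts)
  then have "sqrt ((real_of_int y - (real_of_int n - 1/2 + 2*u))^2 + (real_of_int x - (real_of_int m + 1/2))^2) = 1/2"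
    by (simp add: add.commute)
  from sq_case[OF this] have h: "x = m \<or> x = m + 1" "real_of_int y = real_of_int n - 1/2 + 2*u" by auto
  have "y = n \<or> y = n + 1" by (rule int_between) (use h(2) u in auto)
  then show ?thesis using h(1) by (auto simp: FC_def)
qed

lemma incident_face:
  assumes "incident C \<xi>" "C \<subseteq> present_edges \<omega>"
  shows "\<exists>a\<in>\<xi>. \<exists>e\<in>C. \<exists>m n. pface \<omega> e m n \<and> a \<in> FC m n"
proof -
  obtain v e where v: "v \<in> \<xi>" "e \<in> C" and d: "infdist (of_int (fst v), of_int (snd v)) (edge_segment e) = 1/2"
    using assms(1) unfolding incident_def by blast
  obtain m n where pf: "pface \<omega> e m n" using present_pface assms(2) v(2) by blast
  then have "e = Hd m n \<or> e = Vd m n" by (auto simp: pface_def)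
  then have "(fst v, snd v) \<in> FC m n" using d seg_H seg_V by blast
  then show ?thesis using v pf by auto
qed



lemma black_face_wall:
  assumes om: "\<omega> \<in> Omega" and bf: "black_face m n" and uv: "u \<in> FC m n" "v \<in> FC m n" "grid_adj u v"
    and w: "\<omega> u \<noteq> \<omega> v"
  shows "\<exists>e. pface \<omega> e m n"
proof -
  note sides = omega_sides[OF om bf]
  from black_wedge[OF bf uv] show ?thesis
  proof
    assume h: "wedge u v = Hd m n \<and> ((u,v) \<in> {((m,n),(m,n+1)), ((m,n+1),(m,n))} \<or> (u,v) \<in> {((m+1,n),(m+1,n+1)), ((m+1,n+1),(m+1,n))})"
    then have "upper_lower \<omega> m n" using w sides(1,2) by auto
    then show ?thesis using bf by (auto simp: pface_def)
  next
    assume h: "wedge u v = Vd m n \<and> ((u,v) \<in> {((m,n),(m+1,n)), ((m+1,n),(m,n))} \<or> (u,v) \<in> {((m,n+1),(m+1,n+1)), ((m+1,n+1),(m,n+1))})"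
    then have "left_right \<omega> m n" using w sides(3,4) by auto
    then show ?thesis using bf by (auto simp: pface_def)
  qed
qed

lemma face_uniform:
  assumes om: "\<omega> \<in> Omega"
    and uv: "u \<in> FC x y" "v \<in> FC x y" "grid_adj u v" "\<omega> u \<noteq> \<omega> v"
    and uv': "u' \<in> FC x y" "v' \<in> FC x y" "grid_adj u' v'" "\<omega> u' \<noteq> \<omega> v'"
    and inK: "wedge u v \<in> K \<omega> e0"
  shows "wedge u' v' \<in> K \<omega> e0"
proof (cases "black_face x y")
  case True
  obtain e where pf: "pface \<omega> e x y" using black_face_wall[OF om True uv] by blast
  have "wedge u v = e" "wedge u' v' = e" using black_side[OF om pf] uv uv' by auto
  then show ?thesis using inK by simp
next
  case False
  then have o: "odd (x+y)" by (simp add: black_face_def)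
  have c: "cc x y \<in> wedge u v" "cc x y \<in> wedge u' v'" using white_side[OF o] uv uv' by auto
  have P: "wedge u v \<in> present_edges \<omega>" "wedge u' v' \<in> present_edges \<omega>"
    using wall_pface[OF om] pface_present uv uv' by blast+
  have r: "(e0, wedge u v) \<in> contour_rel \<omega>" using inK by (simp add: K_def)
  show ?thesis using cls_close[OF r P] c by (auto simp: K_def)
qed

lemma clu_sym: "(a,b) \<in> same_cluster \<omega> \<Longrightarrow> (b,a) \<in> same_cluster \<omega>"
proof -
  have "sym {(u, v). grid_adj u v \<and> \<omega> u = \<omega> v}"
    using grid_adj_sym by (auto simp: sym_def)
  from sym_rtrancl[OF this] show "(a,b) \<in> same_cluster \<omega> \<Longrightarrow> (b,a) \<in> same_cluster \<omega>"
    unfolding same_cluster_def by (meson symD)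
qed

lemma clu_step:
  assumes "(v0, u) \<in> same_cluster \<omega>" "grid_adj u w" "\<omega> u = \<omega> w"
  shows "(v0, w) \<in> same_cluster \<omega>"
  using assms(1) unfolding same_cluster_def by (rule rtrancl_into_rtrancl) (use assms(2,3) in simp)

lemma clu_mem:
  assumes "grid_adj u w" "\<omega> u = \<omega> w"
  shows "((v0, u) \<in> same_cluster \<omega>) = ((v0, w) \<in> same_cluster \<omega>)"
  using clu_step[of v0 u \<omega> w] clu_step[of v0 w \<omega> u] assms grid_adj_sym by metis

lemma rt_inv:
  assumes "(a,b) \<in> R\<^sup>*" "\<And>x y. (x,y) \<in> R \<Longrightarrow> f x = f y"
  shows "f a = f b"
  using assms(1) by (induction rule: rtrancl_induct) (auto dest: assms(2))

lemma contour_present: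
  assumes "is_contour \<omega> C" shows "C \<subseteq> present_edges \<omega>"
  using assms cls_present unfolding is_contour_def by blast

theorem main:
  fixes \<omega> :: config and \<xi>0 \<xi>1 :: "(int \<times> int) set" and C1 C2 :: "pt set set"
  assumes om: "\<omega> \<in> Omega"
    and cl0: "is_cluster \<omega> \<xi>0" and cl1: "is_cluster \<omega> \<xi>1"
    and ne: "\<xi>0 \<noteq> \<xi>1"
    and ct1: "is_contour \<omega> C1" and ct2: "is_contour \<omega> C2"
    and neC: "C1 \<noteq> C2"
  shows "\<not> (incident C1 \<xi>0 \<and> incident C1 \<xi>1 \<and> incident C2 \<xi>0 \<and> incident C2 \<xi>1)"
proof
  assume inc: "incident C1 \<xi>0 \<and> incident C1 \<xi>1 \<and> incident C2 \<xi>0 \<and> incident C2 \<xi>1"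
  obtain v0 where X0: "\<xi>0 = {u. (v0, u) \<in> same_cluster \<omega>}" using cl0 by (auto simp: is_cluster_def)
  obtain v1 where X1: "\<xi>1 = {u. (v1, u) \<in> same_cluster \<omega>}" using cl1 by (auto simp: is_cluster_def)
  obtain e1 where e1P: "e1 \<in> present_edges \<omega>" and C1: "C1 = K \<omega> e1"
    using ct1 by (auto simp: is_contour_def K_def)
  obtain e2 where e2P: "e2 \<in> present_edges \<omega>" and C2: "C2 = K \<omega> e2"
    using ct2 by (auto simp: is_contour_def K_def)
  have P1: "C1 \<subseteq> present_edges \<omega>" and P2: "C2 \<subseteq> present_edges \<omega>"
    using contour_present ct1 ct2 by auto
  have disj: "C1 \<inter> C2 = {}" by (rule contour_disj[OF ct1 ct2 neC])
  have mem_same: "\<And>a b. a \<in> \<xi> \<Longrightarrow> b \<in> \<xi> \<Longrightarrow> \<xi> = {u. (v, u) \<in> same_cluster \<omega>} \<Longrightarrow> (a, b) \<in> same_cluster \<omega>" for \<xi> v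
  proof -
    fix a b assume "a \<in> \<xi>" "b \<in> \<xi>" "\<xi> = {u. (v, u) \<in> same_cluster \<omega>}"
    then have "(v,a) \<in> same_cluster \<omega>" "(v,b) \<in> same_cluster \<omega>" by auto
    then show "(a, b) \<in> same_cluster \<omega>"
      using clu_sym unfolding same_cluster_def by (meson rtrancl_trans)
  qed
  have d01: "\<xi>0 \<inter> \<xi>1 = {}"
  proof (rule ccontr)
    assume "\<xi>0 \<inter> \<xi>1 \<noteq> {}"
    then obtain z where "z \<in> \<xi>0" "z \<in> \<xi>1" by auto
    then have "(v0,z) \<in> same_cluster \<omega>" "(v1,z) \<in> same_cluster \<omega>" using X0 X1 by auto
    then have "(v0,v1) \<in> same_cluster \<omega>" "(v1,v0) \<in> same_cluster \<omega>"
      using clu_sym unfolding same_cluster_def by (meson rtrancl_trans)+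
    then have "\<xi>0 = \<xi>1" unfolding X0 X1 same_cluster_def by (auto intro: rtrancl_trans)
    then show False using ne by simp
  qed
  have wallM: "\<And>u w. grid_adj u w \<Longrightarrow> (u \<in> \<xi>0) \<noteq> (w \<in> \<xi>0) \<Longrightarrow> \<omega> u \<noteq> \<omega> w"
    using clu_mem X0 by blast
  obtain a0 f0 m0 n0 where a0: "a0 \<in> \<xi>0" "f0 \<in> C1" "pface \<omega> f0 m0 n0" "a0 \<in> FC m0 n0"
    using incident_face[OF _ P1] inc by blast
  obtain a1 f1 m1 n1 where a1: "a1 \<in> \<xi>1" "f1 \<in> C1" "pface \<omega> f1 m1 n1" "a1 \<in> FC m1 n1"
    using incident_face[OF _ P1] inc by blast
  obtain b0 g0 p0 q0 where b0: "b0 \<in> \<xi>0" "g0 \<in> C2" "pface \<omega> g0 p0 q0" "b0 \<in> FC p0 q0"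
    using incident_face[OF _ P2] inc by blast
  obtain b1 g1 p1 q1 where b1: "b1 \<in> \<xi>1" "g1 \<in> C2" "pface \<omega> g1 p1 q1" "b1 \<in> FC p1 q1"
    using incident_face[OF _ P2] inc by blast
  obtain r1 s1 where pe1: "pface \<omega> e1 r1 s1" using present_pface[OF e1P] by blast
  obtain r2 s2 where pe2: "pface \<omega> e2 r2 s2" using present_pface[OF e2P] by blast
  have c1: "(r1,s1) \<in> FC r1 s1" "(r2,s2) \<in> FC r2 s2" by (auto simp: FC_def)
  have "((r1,s1), a0) \<in> (SR \<omega> C1)\<^sup>*"
  proof -
    have "(e1,f0) \<in> contour_rel \<omega>" using a0(2) C1 by (simp add: K_def)
    from walk[OF om e1P pe1 c1(1) this] show ?thesis using a0(3,4) C1 by blast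
  qed
  moreover have "((r1,s1), a1) \<in> (SR \<omega> C1)\<^sup>*"
  proof -
    have "(e1,f1) \<in> contour_rel \<omega>" using a1(2) C1 by (simp add: K_def)
    from walk[OF om e1P pe1 c1(1) this] show ?thesis using a1(3,4) C1 by blast
  qed
  ultimately have W1: "(a0, a1) \<in> (SR \<omega> C1)\<^sup>*" using SR_rt_sym by (meson rtrancl_trans)
  have "((r2,s2), b0) \<in> (SR \<omega> C2)\<^sup>*"
  proof -
    have "(e2,g0) \<in> contour_rel \<omega>" using b0(2) C2 by (simp add: K_def)
    from walk[OF om e2P pe2 c1(2) this] show ?thesis using b0(3,4) C2 by blast
  qed
  moreover have "((r2,s2), b1) \<in> (SR \<omega> C2)\<^sup>*"
  proof -
    have "(e2,g1) \<in> contour_rel \<omega>" using b1(2) C2 by (simp add: K_def)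
    from walk[OF om e2P pe2 c1(2) this] show ?thesis using b1(3,4) C2 by blast
  qed
  ultimately have W2: "(b1, b0) \<in> (SR \<omega> C2)\<^sup>*" using SR_rt_sym by (meson rtrancl_trans)
  have S1: "(a1, b1) \<in> same_cluster \<omega>" using mem_same[OF a1(1) b1(1) X1] .
  have S0: "(b0, a0) \<in> same_cluster \<omega>" using mem_same[OF b0(1) a0(1) X0] .
  define W where "W u v = (grid_adj u v \<and> \<omega> u \<noteq> \<omega> v \<and> wedge u v \<in> C1 \<and> ((u \<in> \<xi>0) \<noteq> (v \<in> \<xi>0)))" for u v
  have Wsym: "W u v = W v u" for u v
    unfolding W_def using grid_adj_sym wedge_sym by metis
  have Weven: "(W (x,y) (x,y+1) \<noteq> W (x,y+1) (x+1,y+1)) = (W (x+1,y) (x+1,y+1) \<noteq> W (x,y) (x+1,y))" for x y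
  proof -
    have inF: "(x,y) \<in> FC x y" "(x,y+1) \<in> FC x y" "(x+1,y) \<in> FC x y" "(x+1,y+1) \<in> FC x y"
      by (auto simp: FC_def)
    have g: "grid_adj (x,y) (x,y+1)" "grid_adj (x,y+1) (x+1,y+1)" "grid_adj (x+1,y) (x+1,y+1)" "grid_adj (x,y) (x+1,y)"
      by (auto simp: grid_adj_def)
    show ?thesis
    proof (cases "\<exists>u v. u \<in> FC x y \<and> v \<in> FC x y \<and> grid_adj u v \<and> \<omega> u \<noteq> \<omega> v \<and> wedge u v \<in> C1")
      case True
      then obtain u v where uv: "u \<in> FC x y" "v \<in> FC x y" "grid_adj u v" "\<omega> u \<noteq> \<omega> v" "wedge u v \<in> K \<omega> e1"
        using C1 by blast
      have eqW: "W u' v' = ((u' \<in> \<xi>0) \<noteq> (v' \<in> \<xi>0))" if "u' \<in> FC x y" "v' \<in> FC x y" "grid_adj u' v'" for u' v'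
      proof
        assume "W u' v'" then show "(u' \<in> \<xi>0) \<noteq> (v' \<in> \<xi>0)" by (simp add: W_def)
      next
        assume m: "(u' \<in> \<xi>0) \<noteq> (v' \<in> \<xi>0)"
        have w': "\<omega> u' \<noteq> \<omega> v'" using wallM[OF that(3) m] .
        have "wedge u' v' \<in> K \<omega> e1" using face_uniform[OF om uv(1-4) that w' uv(5)] .
        then show "W u' v'" using m w' that(3) C1 by (simp add: W_def)
      qed
      show ?thesis using eqW[OF inF(1) inF(2) g(1)] eqW[OF inF(2) inF(4) g(2)]
          eqW[OF inF(3) inF(4) g(3)] eqW[OF inF(1) inF(3) g(4)] by auto
    next
      case False
      have "\<not> W u v" if "u \<in> FC x y" "v \<in> FC x y" for u v
      proof
        assume "W u v" then show False using False that unfolding W_def by blast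
      qed
      then show ?thesis using inF by auto
    qed
  qed
  obtain \<sigma> :: "int \<times> int \<Rightarrow> bool" where sig: "\<And>u v. grid_adj u v \<Longrightarrow> (\<sigma> u \<noteq> \<sigma> v) = W u v"
    using cut_exists[of W, OF Wsym Weven] by blast
  have "(\<lambda>u. \<sigma> u \<noteq> (u \<in> \<xi>0)) a0 = (\<lambda>u. \<sigma> u \<noteq> (u \<in> \<xi>0)) a1"
  proof (rule rt_inv[OF W1])
    fix u v assume "(u,v) \<in> SR \<omega> C1"
    then have s: "grid_adj u v" "\<omega> u \<noteq> \<omega> v \<Longrightarrow> wedge u v \<in> C1" by (auto simp: SR_def safe_def)
    show "(\<sigma> u \<noteq> (u \<in> \<xi>0)) = (\<sigma> v \<noteq> (v \<in> \<xi>0))"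
    proof (cases "(u \<in> \<xi>0) = (v \<in> \<xi>0)")
      case True
      then have "\<not> W u v" by (simp add: W_def)
      then show ?thesis using sig[OF s(1)] True by auto
    next
      case False
      then have "W u v" using wallM[OF s(1)] s by (auto simp: W_def)
      then show ?thesis using sig[OF s(1)] False by auto
    qed
  qed
  moreover have "a1 \<notin> \<xi>0" using a1(1) d01 by auto
  ultimately have flip: "\<sigma> a0 \<noteq> \<sigma> a1" using a0(1) by auto
  have cw: "\<sigma> u = \<sigma> v" if "(u,v) \<in> same_cluster \<omega>" for u v
  proof (rule rt_inv[OF that[unfolded same_cluster_def]])
    fix x y assume "(x,y) \<in> {(u, v). grid_adj u v \<and> \<omega> u = \<omega> v}"
    then show "\<sigma> x = \<sigma> y" using sig[of x y] by (auto simp: W_def)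
  qed
  have "\<sigma> b1 = \<sigma> b0"
  proof (rule rt_inv[OF W2])
    fix x y assume "(x,y) \<in> SR \<omega> C2"
    then have s: "grid_adj x y" "\<omega> x \<noteq> \<omega> y \<Longrightarrow> wedge x y \<in> C2" by (auto simp: SR_def safe_def)
    have "\<not> W x y" using s disj by (auto simp: W_def)
    then show "\<sigma> x = \<sigma> y" using sig[OF s(1)] by auto
  qed
  then have "\<sigma> a1 = \<sigma> a0" using cw[OF S1] cw[OF S0] by simp
  then show False using flip by simp
qed


theorem lemma6p3:
  fixes \<omega> :: config and \<xi>0 \<xi>1 :: "(int \<times> int) set" and C1 C2 :: "pt set set"
  assumes "\<omega> \<in> Omega"
    and "is_cluster \<omega> \<xi>0" and "infinite \<xi>0"
    and "is_cluster \<omega> \<xi>1" and "infinite \<xi>1"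
    and "\<xi>0 \<noteq> \<xi>1"
    and "is_contour \<omega> C1" and "infinite C1"
    and "is_contour \<omega> C2" and "infinite C2"
    and "C1 \<noteq> C2"
  shows "\<not> (incident C1 \<xi>0 \<and> incident C1 \<xi>1 \<and> incident C2 \<xi>0 \<and> incident C2 \<xi>1)"
  using main[OF assms(1,2,4,6,7,9,11)] .

end
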